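(* Let $Q:\mathcal S\times\mathcal A\to\mathbb R$ be arbitrary and let $\pi_Q$ be a deterministic policy with $\pi_Q(s)\in\arg\max_aQ(s,a)$. Then $$\mathbb E_{s_0\sim\rho}\big(V^\star(s_0)-V^{\pi_Q}(s_0)\big)\le\mathbb E\Big[\sum_{t=0}^\infty\gamma^t\Big((Q^\star-Q)(s_t,\pi^\star(s_t))+(Q-Q^\star)(s_t,\pi_Q(s_t))\Big)\Big],$$ where the expectation is over $s_0\sim\rho$, $a_\tau=\pi_Q(s_\tau)$, $s_{\tau+1}\sim\hat P^{\pi_Q}_{s_\tau,a_\tau}$ with $\hat P^{\pi_Q}(s'|s,a)\propto P(s'|s,a)e^{-\beta V^{\pi_Q}(s')}$, and $\pi^\star(s)\in\arg\max_aQ^\star(s,a)$.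
   Context: $\mathcal S,\mathcal A$ finite; $P=\{P_{s,a}\}$ a transition kernel with $P_{s,a}$ a probability distribution on $\mathcal S$; $r:\mathcal S\times\mathcal A\to[0,1]$; $\gamma\in[0,1)$; $\rho$ a distribution on $\mathcal S$; $\beta>0$. For a policy $\pi$ (map from states to distributions on $\mathcal A$; a deterministic policy is identified with the chosen action $\pi(s)$), $V^\pi,Q^\pi$ are the unique solutions of $V^\pi(s)=\sum_a\pi(a|s)Q^\pi(s,a)$, $Q^\pi(s,a)=r(s,a)-\gamma\beta^{-1}\log\mathbb E_{s'\sim P_{s,a}}e^{-\beta V^\pi(s')}$, and $V^\star,Q^\star$ the unique solutions of $V^\star(s)=\max_aQ^\star(s,a)$, $Q^\star(s,a)=r(s,a)-\gamma\beta^{-1}\log\mathbb E_{s'\sim P_{s,a}}e^{-\beta V^\star(s')}$ (these are the risk-sensitive values for the entropic risk measure, equivalently KL-regularized robust values with penalty $\beta^{-1}\mathrm{KL}$). *)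

theory Defs
  imports Complex_Main
begin

text \<open>States: a finite type 's; actions: a finite type 'a.
  Transition kernel P s a s' = P(s' | s, a). A (stochastic) policy is
  pi :: 's => 'a => real with pi s a = pi(a|s).\<close>

definition soft_backup ::
  "('s::finite \<Rightarrow> 'a \<Rightarrow> 's \<Rightarrow> real) \<Rightarrow> ('s \<Rightarrow> 'a \<Rightarrow> real) \<Rightarrow> real \<Rightarrow> real
   \<Rightarrow> ('s \<Rightarrow> real) \<Rightarrow> 's \<Rightarrow> 'a \<Rightarrow> real" where
  "soft_backup P r \<gamma> \<beta> V s a =
     r s a - \<gamma> / \<beta> * ln (\<Sum>s'\<in>UNIV. P s a s' * exp (- \<beta> * V s'))"

definition Vpi ::
  "('s::finite \<Rightarrow> 'a::finite \<Rightarrow> 's \<Rightarrow> real) \<Rightarrow> ('s \<Rightarrow> 'a \<Rightarrow> real) \<Rightarrow> real \<Rightarrow> real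
   \<Rightarrow> ('s \<Rightarrow> 'a \<Rightarrow> real) \<Rightarrow> 's \<Rightarrow> real" where
  "Vpi P r \<gamma> \<beta> \<pi> =
     (THE V. \<forall>s. V s = (\<Sum>a\<in>UNIV. \<pi> s a * soft_backup P r \<gamma> \<beta> V s a))"

definition Qpi ::
  "('s::finite \<Rightarrow> 'a::finite \<Rightarrow> 's \<Rightarrow> real) \<Rightarrow> ('s \<Rightarrow> 'a \<Rightarrow> real) \<Rightarrow> real \<Rightarrow> real
   \<Rightarrow> ('s \<Rightarrow> 'a \<Rightarrow> real) \<Rightarrow> 's \<Rightarrow> 'a \<Rightarrow> real" where
  "Qpi P r \<gamma> \<beta> \<pi> = soft_backup P r \<gamma> \<beta> (Vpi P r \<gamma> \<beta> \<pi>)"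

definition Vstar ::
  "('s::finite \<Rightarrow> 'a::finite \<Rightarrow> 's \<Rightarrow> real) \<Rightarrow> ('s \<Rightarrow> 'a \<Rightarrow> real) \<Rightarrow> real \<Rightarrow> real
   \<Rightarrow> 's \<Rightarrow> real" where
  "Vstar P r \<gamma> \<beta> =
     (THE V. \<forall>s. V s = Max (range (soft_backup P r \<gamma> \<beta> V s)))"

definition Qstar ::
  "('s::finite \<Rightarrow> 'a::finite \<Rightarrow> 's \<Rightarrow> real) \<Rightarrow> ('s \<Rightarrow> 'a \<Rightarrow> real) \<Rightarrow> real \<Rightarrow> real
   \<Rightarrow> 's \<Rightarrow> 'a \<Rightarrow> real" where
  "Qstar P r \<gamma> \<beta> = soft_backup P r \<gamma> \<beta> (Vstar P r \<gamma> \<beta>)"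

definition det_policy :: "('s \<Rightarrow> 'a) \<Rightarrow> 's \<Rightarrow> 'a \<Rightarrow> real" where
  "det_policy f s a = (if a = f s then 1 else 0)"

definition tilted ::
  "('s::finite \<Rightarrow> 'a \<Rightarrow> 's \<Rightarrow> real) \<Rightarrow> real \<Rightarrow> ('s \<Rightarrow> real) \<Rightarrow> 's \<Rightarrow> 'a \<Rightarrow> 's \<Rightarrow> real" where
  "tilted P \<beta> V s a s' =
     P s a s' * exp (- \<beta> * V s') / (\<Sum>s''\<in>UNIV. P s a s'' * exp (- \<beta> * V s''))"

text \<open>Law of s_t of the chain s_0 ~ rho, a_t = f(s_t), s_{t+1} ~ K(. | s_t, a_t).\<close>
fun state_dist ::
  "('s::finite \<Rightarrow> real) \<Rightarrow> ('s \<Rightarrow> 'a \<Rightarrow> 's \<Rightarrow> real) \<Rightarrow> ('s \<Rightarrow> 'a) \<Rightarrow> nat \<Rightarrow> 's \<Rightarrow> real" where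
  "state_dist \<rho> K f 0 = \<rho>"
| "state_dist \<rho> K f (Suc t) = (\<lambda>s'. \<Sum>s\<in>UNIV. state_dist \<rho> K f t s * K s (f s) s')"

end

theory Submission
  imports Defs
begin


lemma contraction_exists:
  fixes F :: "('s::finite \<Rightarrow> real) \<Rightarrow> 's \<Rightarrow> real"
  assumes g0: "0 \<le> \<gamma>" and g1: "\<gamma> < 1"
  and contr: "\<And>x y c s. (\<forall>s. \<bar>x s - y s\<bar> \<le> c) \<Longrightarrow> \<bar>F x s - F y s\<bar> \<le> \<gamma> * c"
  shows "\<exists>V. \<forall>s. V s = F V s"
proof -
  define V where "V n = (F ^^ n) (\<lambda>_. 0)" for n
  define c0 where "c0 = Max (range (\<lambda>s. \<bar>F (\<lambda>_. 0) s\<bar>))"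
  have V0: "V 0 = (\<lambda>_. 0)" by (simp add: V_def)
  have VS: "V (Suc n) = F (V n)" for n by (simp add: V_def)
  have d: "\<bar>V (Suc n) s - V n s\<bar> \<le> \<gamma> ^ n * c0" for n s
  proof (induction n arbitrary: s)
    case 0
    then show ?case by (simp add: VS V0 c0_def)
  next
    case (Suc n)
    have "\<bar>F (V (Suc n)) s - F (V n) s\<bar> \<le> \<gamma> * (\<gamma> ^ n * c0)"
      by (rule contr) (use Suc in auto)
    then show ?case by (simp add: VS[of "Suc n"] VS[of n])
  qed
  define L where "L s = (\<Sum>k. V (Suc k) s - V k s)" for s
  have conv: "(\<lambda>n. V n s) \<longlonglongrightarrow> L s" for s
  proof -
    have "summable (\<lambda>k. \<gamma> ^ k * c0)"
      using g0 g1 by (intro summable_mult2 summable_geometric) auto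
    hence sm: "summable (\<lambda>k. V (Suc k) s - V k s)"
      by (rule summable_comparison_test[rotated]) (use d in auto)
    have eq: "(\<lambda>n. \<Sum>k<n. V (Suc k) s - V k s) = (\<lambda>n. V n s)"
    proof
      fix n show "(\<Sum>k<n. V (Suc k) s - V k s) = V n s"
        using sum_lessThan_telescope[of "\<lambda>k. V k s" n] by (simp add: V0)
    qed
    have "(\<lambda>n. \<Sum>k<n. V (Suc k) s - V k s) \<longlonglongrightarrow> L s"
      unfolding L_def by (rule summable_LIMSEQ[OF sm])
    then show ?thesis by (simp only: eq)
  qed
  have FL: "(\<lambda>n. F (V n) s) \<longlonglongrightarrow> F L s" for s
  proof (rule LIMSEQ_I)
    fix e :: real assume e: "0 < e"
    have "\<forall>s'. \<exists>N. \<forall>n\<ge>N. norm (V n s' - L s') < e"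
      using conv e by (meson LIMSEQ_D)
    then obtain N where N: "\<And>s' n. n \<ge> N s' \<Longrightarrow> norm (V n s' - L s') < e" by metis
    show "\<exists>no. \<forall>n\<ge>no. norm (F (V n) s - F L s) < e"
    proof (intro exI allI impI)
      fix n assume n: "n \<ge> Max (range N)"
      have "\<forall>s'. \<bar>V n s' - L s'\<bar> \<le> e"
      proof
        fix s'
        have "N s' \<le> Max (range N)" by simp
        then show "\<bar>V n s' - L s'\<bar> \<le> e" using N[of s' n] n by simp
      qed
      hence "\<bar>F (V n) s - F L s\<bar> \<le> \<gamma> * e" by (rule contr)
      also have "\<dots> < e" using e g1 by simp
      finally show "norm (F (V n) s - F L s) < e" by simp
    qed
  qed
  have "\<forall>s. L s = F L s"
  proof
    fix s
    have "(\<lambda>n. V (Suc n) s) \<longlonglongrightarrow> L s" using conv LIMSEQ_Suc by blast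
    hence "(\<lambda>n. F (V n) s) \<longlonglongrightarrow> L s" by (simp add: VS)
    then show "L s = F L s" using FL LIMSEQ_unique by blast
  qed
  then show ?thesis by blast
qed

lemma contraction_unique:
  fixes F :: "('s::finite \<Rightarrow> real) \<Rightarrow> 's \<Rightarrow> real"
  assumes g0: "0 \<le> \<gamma>" and g1: "\<gamma> < 1"
  and contr: "\<And>x y c s. (\<forall>s. \<bar>x s - y s\<bar> \<le> c) \<Longrightarrow> \<bar>F x s - F y s\<bar> \<le> \<gamma> * c"
  and x: "\<forall>s. x s = F x s" and y: "\<forall>s. y s = F y s"
  shows "x = y"
proof -
  define M where "M = Max (range (\<lambda>s. \<bar>x s - y s\<bar>))"
  have M: "\<forall>s. \<bar>x s - y s\<bar> \<le> M" by (simp add: M_def)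
  have "\<forall>s. \<bar>x s - y s\<bar> \<le> \<gamma> * M"
  proof
    fix s
    have "\<bar>F x s - F y s\<bar> \<le> \<gamma> * M" by (rule contr[OF M])
    then show "\<bar>x s - y s\<bar> \<le> \<gamma> * M" using x y by metis
  qed
  hence "M \<le> \<gamma> * M" by (simp add: M_def)
  moreover have "0 \<le> M" using M by (meson abs_ge_zero order_trans)
  ultimately have "M \<le> 0" using g1
    by (metis less_eq_real_def mult_le_cancel_right1 not_le)
  then have "\<forall>s. x s = y s"
  proof (intro allI)
    fix s
    have "\<bar>x s - y s\<bar> \<le> 0" using M \<open>M \<le> 0\<close> order_trans by blast
    then show "x s = y s" by simp
  qed
  then show ?thesis by auto
qed

lemma contraction_the:
  fixes F :: "('s::finite \<Rightarrow> real) \<Rightarrow> 's \<Rightarrow> real"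
  assumes g0: "0 \<le> \<gamma>" and g1: "\<gamma> < 1"
  and contr: "\<And>x y c s. (\<forall>s. \<bar>x s - y s\<bar> \<le> c) \<Longrightarrow> \<bar>F x s - F y s\<bar> \<le> \<gamma> * c"
  shows "\<forall>s. (THE V. \<forall>s. V s = F V s) s = F (THE V. \<forall>s. V s = F V s) s"
proof -
  have "\<exists>!V. \<forall>s. V s = F V s"
    using contraction_exists[of \<gamma> F, OF g0 g1 contr] contraction_unique[of \<gamma> F, OF g0 g1 contr] by blast
  then show ?thesis by (rule theI')
qed



lemma Zpos:
  fixes p :: "'s::finite \<Rightarrow> real"
  assumes "\<And>s'. 0 \<le> p s'" "(\<Sum>s'\<in>UNIV. p s') = 1"
  shows "0 < (\<Sum>s'\<in>UNIV. p s' * exp (h s'))"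
proof -
  obtain s0 where "p s0 \<noteq> 0"
    using assms(2) by (metis (mono_tags) sum.neutral zero_neq_one)
  hence "0 < p s0 * exp (h s0)" using assms(1)[of s0] by simp
  also have "\<dots> \<le> (\<Sum>s'\<in>UNIV. p s' * exp (h s'))"
    by (rule member_le_sum) (simp_all add: assms(1))
  finally show ?thesis .
qed

lemma lse_le:
  fixes p :: "'s::finite \<Rightarrow> real"
  assumes p: "\<And>s'. 0 \<le> p s'" "(\<Sum>s'\<in>UNIV. p s') = 1" and b: "0 < \<beta>"
    and c: "\<forall>s'. y s' - x s' \<le> c"
  shows "ln (\<Sum>s'\<in>UNIV. p s' * exp (- \<beta> * x s')) \<le> \<beta> * c + ln (\<Sum>s'\<in>UNIV. p s' * exp (- \<beta> * y s'))"
proof -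
  have "(\<Sum>s'\<in>UNIV. p s' * exp (- \<beta> * x s')) \<le> (\<Sum>s'\<in>UNIV. exp (\<beta> * c) * (p s' * exp (- \<beta> * y s')))"
  proof (rule sum_mono)
    fix s' :: 's
    have "- \<beta> * x s' \<le> \<beta> * c + - \<beta> * y s'"
      using c b mult_left_mono[of "y s' - x s'" c \<beta>] by (auto simp: algebra_simps)
    hence "exp (- \<beta> * x s') \<le> exp (\<beta> * c) * exp (- \<beta> * y s')"
      by (simp add: exp_add[symmetric])
    then show "p s' * exp (- \<beta> * x s') \<le> exp (\<beta> * c) * (p s' * exp (- \<beta> * y s'))"
      using p(1)[of s'] mult_left_mono by (fastforce simp: algebra_simps)
  qed
  also have "\<dots> = exp (\<beta> * c) * (\<Sum>s'\<in>UNIV. p s' * exp (- \<beta> * y s'))"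
    by (simp add: sum_distrib_left)
  finally have le: "(\<Sum>s'\<in>UNIV. p s' * exp (- \<beta> * x s')) \<le> exp (\<beta> * c) * (\<Sum>s'\<in>UNIV. p s' * exp (- \<beta> * y s'))" .
  have px: "0 < (\<Sum>s'\<in>UNIV. p s' * exp (- \<beta> * x s'))" by (rule Zpos[OF p])
  have py: "0 < (\<Sum>s'\<in>UNIV. p s' * exp (- \<beta> * y s'))" by (rule Zpos[OF p])
  have "ln (\<Sum>s'\<in>UNIV. p s' * exp (- \<beta> * x s')) \<le> ln (exp (\<beta> * c) * (\<Sum>s'\<in>UNIV. p s' * exp (- \<beta> * y s')))"
    using le px by simp
  also have "\<dots> = \<beta> * c + ln (\<Sum>s'\<in>UNIV. p s' * exp (- \<beta> * y s'))"
    using py by (simp add: ln_mult)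
  finally show ?thesis .
qed

lemma backup_contr:
  fixes P :: "'s::finite \<Rightarrow> 'a \<Rightarrow> 's \<Rightarrow> real"
  assumes P_nonneg: "\<And>s a s'. 0 \<le> P s a s'"
    and P_sum: "\<And>s a. (\<Sum>s'\<in>UNIV. P s a s') = 1"
    and g: "0 \<le> \<gamma>" and b: "0 < \<beta>"
    and c: "\<forall>s'. \<bar>x s' - y s'\<bar> \<le> c"
  shows "\<bar>soft_backup P r \<gamma> \<beta> x s a - soft_backup P r \<gamma> \<beta> y s a\<bar> \<le> \<gamma> * c"
proof -
  define A where "A = ln (\<Sum>s'\<in>UNIV. P s a s' * exp (- \<beta> * x s'))"
  define B where "B = ln (\<Sum>s'\<in>UNIV. P s a s' * exp (- \<beta> * y s'))"
  have "A \<le> \<beta> * c + B" unfolding A_def B_def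
    by (rule lse_le[OF P_nonneg P_sum b]) (use c in \<open>auto simp: abs_le_iff\<close>)
  moreover have "B \<le> \<beta> * c + A" unfolding A_def B_def
    by (rule lse_le[OF P_nonneg P_sum b]) (use c in \<open>auto simp: abs_le_iff\<close>)
  ultimately have "\<bar>A - B\<bar> \<le> \<beta> * c" by simp
  hence "\<gamma> / \<beta> * \<bar>A - B\<bar> \<le> \<gamma> / \<beta> * (\<beta> * c)"
    using g b by (intro mult_left_mono) auto
  hence "\<bar>\<gamma> / \<beta> * (A - B)\<bar> \<le> \<gamma> * c" using g b by (simp add: abs_mult)
  moreover have "soft_backup P r \<gamma> \<beta> x s a - soft_backup P r \<gamma> \<beta> y s a = - (\<gamma> / \<beta> * (A - B))"
    by (simp add: soft_backup_def A_def B_def algebra_simps)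
  ultimately show ?thesis by simp
qed



lemma backup_jensen:
  fixes P :: "'s::finite \<Rightarrow> 'a \<Rightarrow> 's \<Rightarrow> real"
  assumes P_nonneg: "\<And>s a s'. 0 \<le> P s a s'"
    and P_sum: "\<And>s a. (\<Sum>s'\<in>UNIV. P s a s') = 1"
    and g: "0 \<le> \<gamma>" and b: "0 < \<beta>"
  shows "soft_backup P r \<gamma> \<beta> Va s a - soft_backup P r \<gamma> \<beta> Vb s a
     \<le> \<gamma> * (\<Sum>s'\<in>UNIV. tilted P \<beta> Vb s a s' * (Va s' - Vb s'))"
proof -
  define w where "w s' = P s a s' * exp (- \<beta> * Vb s')" for s'
  define B where "B = (\<Sum>s'\<in>UNIV. w s')"
  define A where "A = (\<Sum>s'\<in>UNIV. P s a s' * exp (- \<beta> * Va s'))"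
  define D where "D s' = Va s' - Vb s'" for s'
  define m where "m = (\<Sum>s'\<in>UNIV. tilted P \<beta> Vb s a s' * D s')"
  have Bpos: "0 < B" unfolding B_def w_def by (rule Zpos) (simp_all add: P_nonneg P_sum)
  have Apos: "0 < A" unfolding A_def by (rule Zpos) (simp_all add: P_nonneg P_sum)
  have w0: "0 \<le> w s'" for s' by (simp add: w_def P_nonneg)
  have "m = (\<Sum>s'\<in>UNIV. w s' * D s') / B"
    unfolding m_def tilted_def w_def B_def by (simp add: sum_divide_distrib)
  hence wD: "(\<Sum>s'\<in>UNIV. w s' * D s') = m * B" using Bpos by simp
  have "(\<Sum>s'\<in>UNIV. w s' * (exp (- \<beta> * m) * (1 + - \<beta> * (D s' - m)))) \<le> A"
    unfolding A_def
  proof (rule sum_mono)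
    fix s'
    have "exp (- \<beta> * m) * (1 + - \<beta> * (D s' - m)) \<le> exp (- \<beta> * m) * exp (- \<beta> * (D s' - m))"
      using exp_ge_add_one_self[of "- \<beta> * (D s' - m)"] by (intro mult_left_mono) auto
    also have "\<dots> = exp (- \<beta> * D s')" by (simp add: exp_add[symmetric] algebra_simps)
    finally have "w s' * (exp (- \<beta> * m) * (1 + - \<beta> * (D s' - m))) \<le> w s' * exp (- \<beta> * D s')"
      using w0 mult_left_mono by blast
    also have "w s' * exp (- \<beta> * D s') = P s a s' * exp (- \<beta> * Va s')"
      by (simp add: w_def D_def mult.assoc exp_add[symmetric] algebra_simps)
    finally show "w s' * (exp (- \<beta> * m) * (1 + - \<beta> * (D s' - m))) \<le> P s a s' * exp (- \<beta> * Va s')" .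
  qed
  moreover have "(\<Sum>s'\<in>UNIV. w s' * (exp (- \<beta> * m) * (1 + - \<beta> * (D s' - m))))
      = exp (- \<beta> * m) * (B + \<beta> * m * B - \<beta> * (\<Sum>s'\<in>UNIV. w s' * D s'))"
    by (simp add: B_def algebra_simps sum_subtractf sum.distrib sum_distrib_left sum_distrib_right)
  ultimately have le: "exp (- \<beta> * m) * B \<le> A" using wD by simp
  have pos: "0 < exp (- \<beta> * m) * B" using Bpos by simp
  have "ln (exp (- \<beta> * m) * B) \<le> ln A" using le by (simp only: ln_le_cancel_iff[OF pos Apos])
  hence lnA: "- \<beta> * m + ln B \<le> ln A" using Bpos by (simp add: ln_mult)
  have "soft_backup P r \<gamma> \<beta> Va s a - soft_backup P r \<gamma> \<beta> Vb s a = \<gamma> / \<beta> * (ln B - ln A)"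
    by (simp add: soft_backup_def A_def B_def w_def algebra_simps)
  also have "\<dots> \<le> \<gamma> / \<beta> * (\<beta> * m)"
    using g b lnA by (intro mult_left_mono) simp_all
  also have "\<dots> = \<gamma> * m" using b by simp
  finally show ?thesis by (simp add: m_def D_def)
qed

lemma Max_contr:
  fixes f g :: "'a::finite \<Rightarrow> real"
  assumes "\<forall>a. \<bar>f a - g a\<bar> \<le> d"
  shows "\<bar>Max (range f) - Max (range g)\<bar> \<le> d"
proof -
  have h: "Max (range f) \<le> Max (range g) + d" if "\<forall>a. \<bar>f a - g a\<bar> \<le> d" for f g :: "'a \<Rightarrow> real"
  proof -
    have "Max (range f) \<in> range f" by (rule Max_in) auto
    then obtain a where a: "Max (range f) = f a" by blast
    have "\<bar>f a - g a\<bar> \<le> d" using that by blast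
    hence "f a \<le> g a + d" by linarith
    also have "g a \<le> Max (range g)" by simp
    finally show ?thesis using a by simp
  qed
  have "Max (range f) \<le> Max (range g) + d" by (rule h[OF assms])
  moreover have "Max (range g) \<le> Max (range f) + d" by (rule h) (use assms in \<open>auto simp: abs_minus_commute\<close>)
  ultimately show ?thesis unfolding abs_le_iff by linarith
qed



theorem mainTheorem12:
  fixes P :: "'s::finite \<Rightarrow> 'a::finite \<Rightarrow> 's \<Rightarrow> real"
    and r :: "'s \<Rightarrow> 'a \<Rightarrow> real"
    and \<gamma> \<beta> :: real
    and \<rho> :: "'s \<Rightarrow> real"
    and Q :: "'s \<Rightarrow> 'a \<Rightarrow> real"
    and \<pi>Q \<pi>star :: "'s \<Rightarrow> 'a"
  assumes P_nonneg: "\<And>s a s'. 0 \<le> P s a s'"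
    and P_sum: "\<And>s a. (\<Sum>s'\<in>UNIV. P s a s') = 1"
    and r_bounds: "\<And>s a. 0 \<le> r s a \<and> r s a \<le> 1"
    and gamma: "0 \<le> \<gamma>" "\<gamma> < 1"
    and rho_nonneg: "\<And>s. 0 \<le> \<rho> s"
    and rho_sum: "(\<Sum>s\<in>UNIV. \<rho> s) = 1"
    and beta: "0 < \<beta>"
    and piQ_greedy: "\<And>s a. Q s a \<le> Q s (\<pi>Q s)"
    and pistar_greedy: "\<And>s a. Qstar P r \<gamma> \<beta> s a \<le> Qstar P r \<gamma> \<beta> s (\<pi>star s)"
  shows "(\<Sum>s\<in>UNIV. \<rho> s * (Vstar P r \<gamma> \<beta> s - Vpi P r \<gamma> \<beta> (det_policy \<pi>Q) s))
     \<le> (\<Sum>t. \<gamma> ^ t *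
           (\<Sum>s\<in>UNIV. state_dist \<rho> (tilted P \<beta> (Vpi P r \<gamma> \<beta> (det_policy \<pi>Q))) \<pi>Q t s *
              ((Qstar P r \<gamma> \<beta> s (\<pi>star s) - Q s (\<pi>star s))
               + (Q s (\<pi>Q s) - Qstar P r \<gamma> \<beta> s (\<pi>Q s)))))"
proof -
  define Vp where "Vp = Vpi P r \<gamma> \<beta> (det_policy \<pi>Q)"
  define Vs where "Vs = Vstar P r \<gamma> \<beta>"
  define K where "K = tilted P \<beta> Vp"
  define \<mu> where "\<mu> = state_dist \<rho> K \<pi>Q"
  define Qs where "Qs = Qstar P r \<gamma> \<beta>"
  define g where "g s = (Qs s (\<pi>star s) - Q s (\<pi>star s)) + (Q s (\<pi>Q s) - Qs s (\<pi>Q s))" for s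
  define D where "D s = Vs s - Vp s" for s
  define E where "E t h = (\<Sum>s\<in>UNIV. \<mu> t s * h s)" for t and h :: "'s \<Rightarrow> real"
  have bc: "\<And>x y c s a. \<forall>s'. \<bar>x s' - y s'\<bar> \<le> c \<Longrightarrow>
      \<bar>soft_backup P r \<gamma> \<beta> x s a - soft_backup P r \<gamma> \<beta> y s a\<bar> \<le> \<gamma> * c"
    by (rule backup_contr[OF P_nonneg P_sum gamma(1) beta])
  have detsum: "(\<Sum>a\<in>UNIV. det_policy \<pi>Q s a * soft_backup P r \<gamma> \<beta> V s a) = soft_backup P r \<gamma> \<beta> V s (\<pi>Q s)"
    for V s
  proof -
    have "(\<Sum>a\<in>UNIV. det_policy \<pi>Q s a * soft_backup P r \<gamma> \<beta> V s a)
        = (\<Sum>a\<in>UNIV. if a = \<pi>Q s then soft_backup P r \<gamma> \<beta> V s a else 0)"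
      by (rule sum.cong) (auto simp: det_policy_def)
    also have "\<dots> = soft_backup P r \<gamma> \<beta> V s (\<pi>Q s)" by (simp add: sum.delta)
    finally show ?thesis .
  qed
  have Vp_fix: "\<forall>s. Vp s = soft_backup P r \<gamma> \<beta> Vp s (\<pi>Q s)"
  proof -
    have "\<forall>s. (THE V. \<forall>s. V s = (\<Sum>a\<in>UNIV. det_policy \<pi>Q s a * soft_backup P r \<gamma> \<beta> V s a)) s
        = (\<Sum>a\<in>UNIV. det_policy \<pi>Q s a * soft_backup P r \<gamma> \<beta> (THE V. \<forall>s. V s = (\<Sum>a\<in>UNIV. det_policy \<pi>Q s a * soft_backup P r \<gamma> \<beta> V s a)) s a)"
      by (rule contraction_the[of \<gamma> "\<lambda>V s. \<Sum>a\<in>UNIV. det_policy \<pi>Q s a * soft_backup P r \<gamma> \<beta> V s a", OF gamma, simplified])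
         (simp add: detsum bc)
    then show ?thesis unfolding Vp_def Vpi_def by (simp add: detsum)
  qed
  have Vs_fix: "\<forall>s. Vs s = Max (range (soft_backup P r \<gamma> \<beta> Vs s))"
  proof -
    have "\<forall>s. (THE V. \<forall>s. V s = Max (range (soft_backup P r \<gamma> \<beta> V s))) s
        = Max (range (soft_backup P r \<gamma> \<beta> (THE V. \<forall>s. V s = Max (range (soft_backup P r \<gamma> \<beta> V s))) s))"
      by (rule contraction_the[of \<gamma> "\<lambda>V s. Max (range (soft_backup P r \<gamma> \<beta> V s))", OF gamma, simplified])
         (rule Max_contr, blast intro: bc)
    then show ?thesis unfolding Vs_def Vstar_def .
  qed
  have Vs_eq: "Vs s = Qs s (\<pi>star s)" for s
  proof -
    have "Max (range (soft_backup P r \<gamma> \<beta> Vs s)) = soft_backup P r \<gamma> \<beta> Vs s (\<pi>star s)"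
      by (rule Max_eqI) (use pistar_greedy in \<open>auto simp: Qstar_def Vs_def\<close>)
    then show ?thesis using Vs_fix by (simp add: Qs_def Qstar_def Vs_def)
  qed
  have K0: "0 \<le> K s a s'" for s a s'
  proof -
    have "0 < (\<Sum>s''\<in>UNIV. P s a s'' * exp (- \<beta> * Vp s''))"
      by (rule Zpos) (simp_all add: P_nonneg P_sum)
    then show ?thesis by (simp add: K_def tilted_def P_nonneg)
  qed
  have K1: "(\<Sum>s'\<in>UNIV. K s a s') = 1" for s a
  proof -
    have "0 < (\<Sum>s''\<in>UNIV. P s a s'' * exp (- \<beta> * Vp s''))"
      by (rule Zpos) (simp_all add: P_nonneg P_sum)
    then show ?thesis by (simp add: K_def tilted_def sum_divide_distrib[symmetric])
  qed
  have mu: "(\<forall>s. 0 \<le> \<mu> t s) \<and> (\<Sum>s\<in>UNIV. \<mu> t s) = 1" for t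
  proof (induction t)
    case 0
    then show ?case by (simp add: \<mu>_def rho_nonneg rho_sum)
  next
    case (Suc t)
    have "\<forall>s'. 0 \<le> \<mu> (Suc t) s'"
      using Suc K0 by (simp add: \<mu>_def sum_nonneg)
    moreover have "(\<Sum>s'\<in>UNIV. \<mu> (Suc t) s') = (\<Sum>s\<in>UNIV. \<mu> t s * (\<Sum>s'\<in>UNIV. K s (\<pi>Q s) s'))"
      by (simp add: \<mu>_def sum_distrib_left) (rule sum.swap)
    ultimately show ?case using Suc by (simp add: K1)
  qed
  have mu0: "0 \<le> \<mu> t s" for t s using mu by blast
  have mu1: "\<mu> t s \<le> 1" for t s
  proof -
    have "\<mu> t s \<le> (\<Sum>s\<in>UNIV. \<mu> t s)" by (rule member_le_sum) (simp_all add: mu0)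
    then show ?thesis using mu by simp
  qed
  have key: "D s \<le> g s + \<gamma> * (\<Sum>s'\<in>UNIV. K s (\<pi>Q s) s' * D s')" for s
  proof -
    have "Qs s (\<pi>Q s) - Vp s \<le> \<gamma> * (\<Sum>s'\<in>UNIV. K s (\<pi>Q s) s' * D s')"
      using backup_jensen[OF P_nonneg P_sum gamma(1) beta, where r=r and Va=Vs and s=s and a="\<pi>Q s" and Vb=Vp] Vp_fix
      by (simp add: Qs_def Qstar_def Vs_def K_def D_def)
    moreover have "Q s (\<pi>star s) \<le> Q s (\<pi>Q s)" by (rule piQ_greedy)
    ultimately show ?thesis by (simp add: D_def g_def Vs_eq)
  qed
  have step: "E t D \<le> E t g + \<gamma> * E (Suc t) D" for t
  proof -
    have "E t D \<le> (\<Sum>s\<in>UNIV. \<mu> t s * (g s + \<gamma> * (\<Sum>s'\<in>UNIV. K s (\<pi>Q s) s' * D s')))"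
      unfolding E_def by (rule sum_mono) (rule mult_left_mono[OF key mu0])
    also have "\<dots> = E t g + \<gamma> * (\<Sum>s\<in>UNIV. \<Sum>s'\<in>UNIV. \<mu> t s * K s (\<pi>Q s) s' * D s')"
      by (simp add: E_def algebra_simps sum.distrib sum_distrib_left)
    also have "(\<Sum>s\<in>UNIV. \<Sum>s'\<in>UNIV. \<mu> t s * K s (\<pi>Q s) s' * D s') = E (Suc t) D"
      unfolding E_def by (simp add: \<mu>_def sum_distrib_right) (rule sum.swap)
    finally show ?thesis .
  qed
  have iter: "E 0 D \<le> (\<Sum>t<n. \<gamma> ^ t * E t g) + \<gamma> ^ n * E n D" for n
  proof (induction n)
    case 0
    then show ?case by simp
  next
    case (Suc n)
    have "\<gamma> ^ n * E n D \<le> \<gamma> ^ n * (E n g + \<gamma> * E (Suc n) D)"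
      using gamma by (intro mult_left_mono step) auto
    then show ?case using Suc by (simp add: algebra_simps)
  qed
  have bnd: "\<bar>E t h\<bar> \<le> (\<Sum>s\<in>UNIV. \<bar>h s\<bar>)" for t h
  proof -
    have "\<bar>E t h\<bar> \<le> (\<Sum>s\<in>UNIV. \<bar>\<mu> t s * h s\<bar>)" unfolding E_def by (rule sum_abs)
    also have "\<dots> \<le> (\<Sum>s\<in>UNIV. \<bar>h s\<bar>)"
    proof (rule sum_mono)
      fix s
      have "\<mu> t s * \<bar>h s\<bar> \<le> 1 * \<bar>h s\<bar>" by (rule mult_right_mono[OF mu1]) simp
      then show "\<bar>\<mu> t s * h s\<bar> \<le> \<bar>h s\<bar>" using mu0[of t s] by (simp add: abs_mult)
    qed
    finally show ?thesis .
  qed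
  have gp: "(\<lambda>n. \<gamma> ^ n) \<longlonglongrightarrow> 0" using gamma by (intro LIMSEQ_power_zero) auto
  have sm: "summable (\<lambda>t. \<gamma> ^ t * E t g)"
  proof (rule summable_comparison_test[rotated])
    show "summable (\<lambda>t. \<gamma> ^ t * (\<Sum>s\<in>UNIV. \<bar>g s\<bar>))"
      using gamma by (intro summable_mult2 summable_geometric) auto
    show "\<exists>N. \<forall>n\<ge>N. norm (\<gamma> ^ n * E n g) \<le> \<gamma> ^ n * (\<Sum>s\<in>UNIV. \<bar>g s\<bar>)"
      using gamma bnd by (auto simp: abs_mult intro!: mult_left_mono)
  qed
  have t0: "(\<lambda>n. \<gamma> ^ n * E n D) \<longlonglongrightarrow> 0"
  proof (rule tendsto_sandwich[of "\<lambda>n. - (\<gamma> ^ n * (\<Sum>s\<in>UNIV. \<bar>D s\<bar>))" _ _ "\<lambda>n. \<gamma> ^ n * (\<Sum>s\<in>UNIV. \<bar>D s\<bar>)"])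
    have hb: "\<bar>\<gamma> ^ n * E n D\<bar> \<le> \<gamma> ^ n * (\<Sum>s\<in>UNIV. \<bar>D s\<bar>)" for n
      using gamma bnd by (auto simp: abs_mult intro!: mult_left_mono)
    have h1: "- (\<gamma> ^ n * (\<Sum>s\<in>UNIV. \<bar>D s\<bar>)) \<le> \<gamma> ^ n * E n D" for n
      using hb[of n] by linarith
    have h2: "\<gamma> ^ n * E n D \<le> \<gamma> ^ n * (\<Sum>s\<in>UNIV. \<bar>D s\<bar>)" for n
      using hb[of n] by linarith
    show "\<forall>\<^sub>F n in sequentially. - (\<gamma> ^ n * (\<Sum>s\<in>UNIV. \<bar>D s\<bar>)) \<le> \<gamma> ^ n * E n D"
      using h1 by (intro always_eventually allI)
    show "\<forall>\<^sub>F n in sequentially. \<gamma> ^ n * E n D \<le> \<gamma> ^ n * (\<Sum>s\<in>UNIV. \<bar>D s\<bar>)"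
      using h2 by (intro always_eventually allI)
    show "(\<lambda>n. - (\<gamma> ^ n * (\<Sum>s\<in>UNIV. \<bar>D s\<bar>))) \<longlonglongrightarrow> 0"
      using tendsto_minus[OF tendsto_mult_left_zero[OF gp]] by simp
    show "(\<lambda>n. \<gamma> ^ n * (\<Sum>s\<in>UNIV. \<bar>D s\<bar>)) \<longlonglongrightarrow> 0"
      using tendsto_mult_left_zero[OF gp] by simp
  qed
  have "(\<lambda>n. (\<Sum>t<n. \<gamma> ^ t * E t g) + \<gamma> ^ n * E n D) \<longlonglongrightarrow> (\<Sum>t. \<gamma> ^ t * E t g) + 0"
    by (intro tendsto_add summable_LIMSEQ sm t0)
  hence fin: "E 0 D \<le> (\<Sum>t. \<gamma> ^ t * E t g)"
    using iter by (intro LIMSEQ_le_const) auto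
  then show ?thesis
    unfolding E_def \<mu>_def D_def g_def Vp_def Vs_def K_def Qs_def by simp
qed


end
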